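(* On $V=\mathbb R$ with the standard metric, let $\phi(x)=e^{-1/x^2}$ for $x\neq0$, $\phi(0)=0$, and let $X=f(x)\partial_x$ with $f(x)=\frac{2}{x^3}e^{-1/x^2}$ for $x<0$, $f(0)=0$, $f(x)=\frac{1}{x^3}e^{-1/x^2}$ for $x>0$. Then there exists a continuous function $\delta:\mathbb R\to(0,\infty)$ with $d\phi(X)\ge\delta(|X|^2+|d\phi|^2)$ on $\mathbb R$, but there is no smooth $(2,0)$ tensor field $g$ on $\mathbb R$ with $g(v,v)>0$ for all $v\ne0$ and $d\phi=g(X,\cdot)$. *)

theory Defs
  imports "HOL-Analysis.Analysis"
begin

definition phi :: "real \<Rightarrow> real" where
  "phi x = (if x = 0 then 0 else exp (- 1 / x ^ 2))"

definition fX :: "real \<Rightarrow> real" where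
  "fX x = (if x < 0 then 2 / x ^ 3 * exp (- 1 / x ^ 2)
           else if x = 0 then 0
           else 1 / x ^ 3 * exp (- 1 / x ^ 2))"

definition smooth_on_R :: "(real \<Rightarrow> real) \<Rightarrow> bool" where
  "smooth_on_R g \<longleftrightarrow> (\<forall>n x. ((deriv ^^ n) g) differentiable (at x))"

end

theory Submission imports Defs "HOL-Real_Asymp.Real_Asymp" begin

lemma L: "((\<lambda>x::real. exp(-1/x^2)/x) \<longlongrightarrow> 0) (at_left 0)" by real_asymp
lemma R: "((\<lambda>x::real. exp(-1/x^2)/x) \<longlongrightarrow> 0) (at_right 0)" by real_asymp

lemma d0: "(phi has_real_derivative 0) (at 0)"
proof -
  have "((\<lambda>x::real. exp(-1/x^2)/x) \<longlongrightarrow> 0) (at 0)"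
    using L R by (simp add: filterlim_split_at)
  then have "((\<lambda>y. (phi y - phi 0) / (y - 0)) \<longlongrightarrow> 0) (at 0)"
    by (rule Lim_transform_eventually) (auto simp: phi_def eventually_at_filter)
  then show ?thesis by (simp add: has_field_derivative_iff)
qed

lemma dx: assumes "x \<noteq> 0" shows "(phi has_real_derivative (2/x^3 * exp(-1/x^2))) (at x)"
proof -
  have "((\<lambda>x. exp(-1/x^2)) has_real_derivative (exp(-1/x^2) * (2/x^3))) (at x)"
    using assms by (auto intro!: derivative_eq_intros simp: field_simps power_def)
  then have "((\<lambda>x. exp(-1/x^2)) has_real_derivative (2/x^3 * exp(-1/x^2))) (at x)"
    by (simp add: mult.commute)
  then show ?thesis
    apply (rule has_field_derivative_transform_within_open[where S="-{0}"])
    using assms by (auto simp: phi_def)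
qed

lemma dphi: "deriv phi x = (if x = 0 then 0 else 2/x^3 * exp(-1/x^2))"
  using d0 dx DERIV_imp_deriv by (cases "x=0") auto

lemma dphi_f: "deriv phi x = (if x < 0 then fX x else 2 * fX x)"
  by (auto simp: dphi fX_def)

theorem mainTheorem6:
  shows "(\<exists>\<delta> :: real \<Rightarrow> real. continuous_on UNIV \<delta> \<and> (\<forall>x. \<delta> x > 0) \<and>
            (\<forall>x. deriv phi x * fX x \<ge> \<delta> x * ((fX x)\<^sup>2 + (deriv phi x)\<^sup>2)))
       \<and> \<not> (\<exists>g :: real \<Rightarrow> real. smooth_on_R g \<and> (\<forall>x. g x > 0) \<and>
                (\<forall>x. deriv phi x = g x * fX x))"
proof
  show "\<exists>\<delta> :: real \<Rightarrow> real. continuous_on UNIV \<delta> \<and> (\<forall>x. \<delta> x > 0) \<and>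
            (\<forall>x. deriv phi x * fX x \<ge> \<delta> x * ((fX x)\<^sup>2 + (deriv phi x)\<^sup>2))"
  proof (intro exI[of _ "\<lambda>_. 1/4"] conjI allI)
    fix x :: real
    have "0 \<le> (fX x)^2" by simp
    then show "1/4 * ((fX x)\<^sup>2 + (deriv phi x)\<^sup>2) \<le> deriv phi x * fX x"
      unfolding dphi_f by (auto simp: power2_eq_square)
  qed auto
next
  show "\<not> (\<exists>g :: real \<Rightarrow> real. smooth_on_R g \<and> (\<forall>x. g x > 0) \<and>
                (\<forall>x. deriv phi x = g x * fX x))"
  proof
    assume "\<exists>g :: real \<Rightarrow> real. smooth_on_R g \<and> (\<forall>x. g x > 0) \<and>
                (\<forall>x. deriv phi x = g x * fX x)"
    then obtain g where sm: "smooth_on_R g" and eq: "\<And>x. deriv phi x = g x * fX x" by blast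
    have fnz: "fX x \<noteq> 0" if "x \<noteq> 0" for x using that by (auto simp: fX_def)
    have gl: "g x = 1" if "x < 0" for x
      using eq[of x] fnz[of x] that by (simp add: dphi_f)
    have gr: "g x = 2" if "x > 0" for x
      using eq[of x] fnz[of x] that by (simp add: dphi_f)
    have "g differentiable (at 0)" using sm unfolding smooth_on_R_def
      by (metis funpow_0)
    then have c: "isCont g 0" by (rule differentiable_imp_continuous_within)
    have "(g \<longlongrightarrow> g 0) (at_left 0)" using c
      by (simp add: isCont_def filterlim_at_split)
    moreover have "(g \<longlongrightarrow> 1) (at_left 0)"
      by (rule tendsto_eventually) (auto simp: eventually_at_left_field intro!: exI[of _ "-1"] gl)
    ultimately have g1: "g 0 = 1" by (rule tendsto_unique[OF trivial_limit_at_left_real])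
    have "(g \<longlongrightarrow> g 0) (at_right 0)" using c
      by (simp add: isCont_def filterlim_at_split)
    moreover have "(g \<longlongrightarrow> 2) (at_right 0)"
      by (rule tendsto_eventually) (auto simp: eventually_at_right_field intro!: exI[of _ "1"] gr)
    ultimately have "g 0 = 2" by (rule tendsto_unique[OF trivial_limit_at_right_real])
    with g1 show False by simp
  qed
qed

end
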